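(* There is a multi-valued function $F: [0,1] \Rightarrow \mathbb{R}$ such that $F(x)$ is closed for every $x\in[0,1]$, the graph of $F$ is a $\Pi^0_2$ subset of $[0,1]\times\mathbb{R}$, and the set of points of continuity of $F$ is not a $\Pi^0_3$ subset of $[0,1]$.
   Context: A multi-valued function $F: X \Rightarrow Y$ assigns to each $x$ a nonempty set $F(x)\subseteq Y$ and is identified with its graph $\{(x,y): y\in F(x)\}\subseteq X\times Y$. For metric spaces $(X,p),(Y,d)$, $F$ is continuous at $x$ if there is some $y \in F(x)$ such that for every $\varepsilon>0$ there is $\delta>0$ such that for every $x' \in B_p(x,\delta)$ there is $y' \in F(x')$ with $d(y,y')<\varepsilon$. Borel hierarchy: $\Sigma^0_1$ = open; $\Sigma^0_{n+1}$ = countable unions of sets whose complements are $\Sigma^0_k$ for some $k\le n$; $\Pi^0_n$ = complements of $\Sigma^0_n$ sets ($\Pi^0_2=G_\delta$, $\Pi^0_3$ = countable intersections of $F_\sigma$ sets). *)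

theory Defs
  imports "HOL-Analysis.Analysis"
begin

text \<open>Boldface Borel hierarchy relative to a topological space T.
  borel_levels n T = (Sigma^0_n sets, union of Pi^0_k sets for 1 <= k <= n).
  Index 0 is unused (empty).\<close>

fun borel_levels :: "nat \<Rightarrow> 'a topology \<Rightarrow> 'a set set \<times> 'a set set" where
  "borel_levels 0 T = ({}, {})"
| "borel_levels (Suc 0) T =
     (Collect (openin T), {topspace T - S | S. openin T S})"
| "borel_levels (Suc (Suc n)) T =
     (let c = snd (borel_levels (Suc n) T);
          s = {\<Union>\<U> | \<U>. countable \<U> \<and> \<U> \<subseteq> c}
      in (s, c \<union> {topspace T - S | S. S \<in> s}))"

definition Sigma0 :: "nat \<Rightarrow> 'a topology \<Rightarrow> 'a set set" where
  "Sigma0 n T = fst (borel_levels n T)"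

definition Pi0 :: "nat \<Rightarrow> 'a topology \<Rightarrow> 'a set set" where
  "Pi0 n T = {topspace T - S | S. S \<in> Sigma0 n T}"

definition mv_continuous_at ::
  "('a::metric_space \<Rightarrow> 'b::metric_space set) \<Rightarrow> 'a set \<Rightarrow> 'a \<Rightarrow> bool" where
  "mv_continuous_at F X x \<longleftrightarrow>
     (\<exists>y\<in>F x. \<forall>\<epsilon>>0. \<exists>\<delta>>0. \<forall>x'\<in>X. dist x x' < \<delta> \<longrightarrow>
        (\<exists>y'\<in>F x'. dist y y' < \<epsilon>))"

end

theory Submission
  imports Defs "HOL-Library.Nat_Bijection"
begin

definition d3 :: "(nat \<Rightarrow> bool) \<Rightarrow> nat \<Rightarrow> real" where
  "d3 b i = (if b i then 2 else 0) / 3^(Suc i)"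
definition phi :: "(nat \<Rightarrow> bool) \<Rightarrow> real" where
  "phi b = (\<Sum>i. d3 b i)"
definition agree :: "nat \<Rightarrow> (nat \<Rightarrow> bool) \<Rightarrow> (nat \<Rightarrow> bool) \<Rightarrow> bool" where
  "agree n a b \<longleftrightarrow> (\<forall>i<n. a i = b i)"

lemma geo_sums: "(\<lambda>i. 2 / 3^(Suc i) :: real) sums 1"
proof -
  have "(\<lambda>i. (1/3::real)^i) sums (1 / (1 - 1/3))" by (rule geometric_sums) simp
  then have "(\<lambda>i. (2/3) * (1/3::real)^i) sums ((2/3) * (1 / (1 - 1/3)))" by (rule sums_mult)
  moreover have "(\<lambda>i. (2/3) * (1/3::real)^i) = (\<lambda>i. 2 / 3^(Suc i))"
    by (auto simp: power_divide field_simps)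
  ultimately show ?thesis by simp
qed

lemma d3_bounds: "0 \<le> d3 b i" "d3 b i \<le> 2 / 3^(Suc i)"
  by (auto simp: d3_def)

lemma summable_d3: "summable (d3 b)"
  by (rule summable_comparison_test[where g="\<lambda>i. 2 / 3^(Suc i)"])
     (use d3_bounds geo_sums sums_summable in auto)

lemma phi_bounds: "0 \<le> phi b" "phi b \<le> 1"
proof -
  show "0 \<le> phi b" unfolding phi_def by (rule suminf_nonneg[OF summable_d3]) (simp add: d3_bounds)
  have "phi b \<le> (\<Sum>i. 2 / 3^(Suc i))" unfolding phi_def
    by (rule suminf_le) (use d3_bounds summable_d3 geo_sums sums_summable in auto)
  then show "phi b \<le> 1" using geo_sums sums_unique by fastforce
qed

lemma phi_split: "phi b = (\<Sum>i<k. d3 b i) + phi (\<lambda>n. b (n+k)) / 3^k"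
proof -
  have "phi b = (\<Sum>n. d3 b (n+k)) + (\<Sum>i<k. d3 b i)"
    unfolding phi_def by (rule suminf_split_initial_segment[OF summable_d3])
  moreover have "(\<lambda>n. d3 b (n+k)) = (\<lambda>n. d3 (\<lambda>n. b (n+k)) n / 3^k)"
    by (auto simp: d3_def power_add field_simps)
  moreover have "(\<Sum>n. d3 (\<lambda>n. b (n+k)) n / 3^k) = phi (\<lambda>n. b (n+k)) / 3^k"
    unfolding phi_def by (rule suminf_divide[OF summable_d3])
  ultimately show ?thesis by simp
qed

lemma phi_first: "phi b = (if b 0 then 2 else 0)/3 + phi (\<lambda>n. b (Suc n))/3"
  using phi_split[of b 1] by (simp add: d3_def)

lemma phi_agree: assumes "agree k a b" shows "\<bar>phi a - phi b\<bar> \<le> 1/3^k"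
proof -
  have s: "(\<Sum>i<k. d3 a i) = (\<Sum>i<k. d3 b i)"
    using assms by (auto simp: agree_def d3_def intro!: sum.cong)
  have "phi a - phi b = (phi (\<lambda>n. a (n+k)) - phi (\<lambda>n. b (n+k))) / 3^k"
    using phi_split[of a k] phi_split[of b k] s by (simp add: diff_divide_distrib)
  moreover have "\<bar>phi (\<lambda>n. a (n+k)) - phi (\<lambda>n. b (n+k))\<bar> \<le> 1"
    using phi_bounds[of "\<lambda>n. a (n+k)"] phi_bounds[of "\<lambda>n. b (n+k)"] by linarith
  ultimately show ?thesis by (simp add: abs_divide divide_right_mono)
qed

lemma phi_diff0: assumes "a 0 \<noteq> b 0" shows "\<bar>phi a - phi b\<bar> \<ge> 1/3"
  using phi_first[of a] phi_first[of b] assms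
    phi_bounds[of "\<lambda>n. a (Suc n)"] phi_bounds[of "\<lambda>n. b (Suc n)"]
  by (cases "a 0") auto

lemma phi_diff: assumes "agree i a b" "a i \<noteq> b i" shows "\<bar>phi a - phi b\<bar> \<ge> 1/3^(Suc i)"
proof -
  have s: "(\<Sum>j<i. d3 a j) = (\<Sum>j<i. d3 b j)"
    using assms by (auto simp: agree_def d3_def intro!: sum.cong)
  have "phi a - phi b = (phi (\<lambda>n. a (n+i)) - phi (\<lambda>n. b (n+i))) / 3^i"
    using phi_split[of a i] phi_split[of b i] s by (simp add: diff_divide_distrib)
  then have e: "\<bar>phi a - phi b\<bar> = \<bar>phi (\<lambda>n. a (n+i)) - phi (\<lambda>n. b (n+i))\<bar> / 3^i"
    by (simp add: abs_divide)
  have "\<bar>phi (\<lambda>n. a (n+i)) - phi (\<lambda>n. b (n+i))\<bar> \<ge> 1/3"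
    by (rule phi_diff0) (use assms in simp)
  then have "\<bar>phi (\<lambda>n. a (n+i)) - phi (\<lambda>n. b (n+i))\<bar> / 3^i \<ge> (1/3) / 3^i"
    by (intro divide_right_mono) auto
  then show ?thesis using e by simp
qed

lemma phi_close_agree: "\<bar>phi a - phi b\<bar> < 1/3^n \<Longrightarrow> agree n a b"
proof (induction n)
  case 0 then show ?case by (simp add: agree_def)
next
  case (Suc n)
  have "(1::real)/3^(Suc n) \<le> 1/3^n" by (simp add: field_simps)
  then have "agree n a b" using Suc by linarith
  moreover have "a n = b n"
    using phi_diff[OF \<open>agree n a b\<close>] Suc.prems by force
  ultimately show ?case by (auto simp: agree_def less_Suc_eq)
qed

lemma phi_inj: "phi a = phi b \<Longrightarrow> a = b"
proof
  fix i assume "phi a = phi b"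
  then have "agree (Suc i) a b" by (intro phi_close_agree) simp
  then show "a i = b i" by (simp add: agree_def)
qed

lemma phi_False: "phi (\<lambda>_. False) = 0" by (simp add: phi_def d3_def)
lemma phi_True: "phi (\<lambda>_. True) = 1"
  using geo_sums sums_unique by (fastforce simp: phi_def d3_def)

lemma small_pow: assumes "\<And>j. \<bar>t::real\<bar> \<le> 2/3^j" shows "t = 0"
proof (rule ccontr)
  assume "t \<noteq> 0"
  then have "0 < \<bar>t\<bar>/2" by simp
  then obtain n where n: "(1/3::real)^n < \<bar>t\<bar>/2" using real_arch_pow_inv[of "\<bar>t\<bar>/2" "1/3::real"] by auto
  have "\<bar>t\<bar> \<le> 2/3^n" by (rule assms)
  moreover have "2/3^n = 2 * (1/3::real)^n" by (simp add: power_divide)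
  ultimately show False using n by linarith
qed

lemma closed_range_phi: "closed (range phi)"
proof -
  have "closure (range phi) \<subseteq> range phi"
  proof
    fix x assume "x \<in> closure (range phi)"
    then have ap: "\<forall>e>0. \<exists>y\<in>range phi. dist y x < e" by (simp add: closure_approachable)
    have "\<forall>j. \<exists>b. \<bar>phi b - x\<bar> < 1/(2*3^j)"
    proof
      fix j :: nat
      have "(0::real) < 1/(2*3^j)" by simp
      then obtain y where "y \<in> range phi" "dist y x < 1/(2*3^j)" using ap by blast
      then show "\<exists>b. \<bar>phi b - x\<bar> < 1/(2*3^j)" by (auto simp: dist_real_def)
    qed
    then obtain B where B: "\<And>j. \<bar>phi (B j) - x\<bar> < 1/(2*3^j)" by metis
    have ag: "agree j (B j) (B j')" if "j \<le> j'" for j j'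
    proof (rule phi_close_agree)
      have "(1::real)/(2*3^j') \<le> 1/(2*3^j)" using that by (simp add: field_simps)
      moreover have "(1::real)/(2*3^j) + 1/(2*3^j) = 1/3^j" by simp
      moreover have "\<bar>phi (B j) - phi (B j')\<bar> \<le> \<bar>phi (B j) - x\<bar> + \<bar>phi (B j') - x\<bar>" by arith
      ultimately show "\<bar>phi (B j) - phi (B j')\<bar> < 1/3^j" using B[of j] B[of j'] by linarith
    qed
    define bs where "bs i = B (Suc i) i" for i
    have agb: "agree j bs (B j)" for j
      unfolding agree_def bs_def using ag[of "Suc _" j] by (auto simp: agree_def Suc_le_eq)
    have "\<bar>phi bs - x\<bar> \<le> 2/3^j" for j
    proof -
      have "\<bar>phi bs - phi (B j)\<bar> \<le> 1/3^j" by (rule phi_agree[OF agb])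
      moreover have "(1::real)/(2*3^j) \<le> 1/3^j" by (simp add: field_simps)
      moreover have "(1::real)/3^j + 1/3^j = 2/3^j" by simp
      moreover have "\<bar>phi bs - x\<bar> \<le> \<bar>phi bs - phi (B j)\<bar> + \<bar>phi (B j) - x\<bar>" by arith
      ultimately show ?thesis using B[of j] by linarith
    qed
    then have "phi bs - x = 0" by (intro small_pow) 
    then show "x \<in> range phi" by (metis eq_iff_diff_eq_0 rangeI)
  qed
  then show ?thesis by (simp add: closure_subset_eq)
qed

lemma phi_ne_half: "phi s \<noteq> 1/2"
  using phi_first[of s] phi_bounds[of "\<lambda>n. s (Suc n)"] by (cases "s 0") auto

lemma gap_point: "\<exists>x'. x' \<in> {0..1} \<and> x' \<notin> range phi \<and> \<bar>x' - phi b\<bar> < 2/3^L"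
proof -
  define t where "t i = (i < L \<and> b i)" for i
  define S where "S = (\<Sum>i<L. d3 t i)"
  have c: "phi t = S" using phi_split[of t L] phi_False by (simp add: S_def t_def)
  define tp where "tp i = (if i < L then b i else True)" for i
  have "(\<Sum>i<L. d3 tp i) = S" unfolding S_def by (auto simp: d3_def t_def tp_def intro!: sum.cong)
  then have ctp: "phi tp = S + 1/3^L" using phi_split[of tp L] phi_True by (simp add: tp_def)
  define x' where "x' = S + 1/(2*3^L)"
  have "x' \<in> {0..1}"
    using phi_bounds[of t] phi_bounds[of tp] c ctp by (auto simp: x'_def field_simps)
  moreover have "x' \<notin> range phi"
  proof
    assume "x' \<in> range phi"
    then obtain b'' where e: "x' = phi b''" by auto
    show False
    proof (cases "agree L b'' t")
      case True
      have "(\<Sum>i<L. d3 b'' i) = S" unfolding S_def using True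
        by (auto simp: agree_def d3_def intro!: sum.cong)
      then have "phi b'' = S + phi (\<lambda>n. b'' (n+L))/3^L" using phi_split[of b'' L] by simp
      then have "phi (\<lambda>n. b'' (n+L)) = 1/2" using e by (simp add: x'_def field_simps)
      then show False using phi_ne_half by blast
    next
      case False
      then have "\<not> \<bar>phi b'' - phi t\<bar> < 1/3^L" using phi_close_agree by blast
      moreover have "(1::real)/(2*3^L) < 1/3^L" by (simp add: field_simps)
      ultimately show False using e c by (simp add: x'_def)
    qed
  qed
  moreover have "\<bar>x' - phi b\<bar> < 2/3^L"
  proof -
    have "agree L t b" by (simp add: agree_def t_def)
    then have "\<bar>phi t - phi b\<bar> \<le> 1/3^L" by (rule phi_agree)
    moreover have "(1::real)/(2*3^L) < 1/3^L" by (simp add: field_simps)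
    moreover have "(1::real)/3^L + 1/3^L = 2/3^L" by simp
    moreover have "\<bar>x' - phi b\<bar> \<le> \<bar>phi t - phi b\<bar> + 1/(2*3^L)" using c abs_triangle_ineq[of "S - phi b" "1/(2*3^L)"] by (simp add: x'_def algebra_simps)
    ultimately show ?thesis by linarith
  qed
  ultimately show ?thesis by blast
qed

definition r :: "nat \<Rightarrow> nat" where "r p = fst (prod_decode p)"
definition P3 :: "(nat \<Rightarrow> bool) \<Rightarrow> bool" where "P3 b \<longleftrightarrow> (\<forall>m. finite {p. r p = m \<and> b p})"
definition adm :: "nat \<Rightarrow> nat \<Rightarrow> (nat \<Rightarrow> bool) \<Rightarrow> (nat \<Rightarrow> bool) \<Rightarrow> bool" where
  "adm k L s b \<longleftrightarrow> agree L s b \<and> (\<forall>i\<ge>L. r i < k \<longrightarrow> \<not> b i)"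
definition ext :: "nat \<Rightarrow> nat \<Rightarrow> (nat \<Rightarrow> bool) \<Rightarrow> nat \<Rightarrow> (nat \<Rightarrow> bool) \<Rightarrow> bool" where
  "ext k L s L' s' \<longleftrightarrow> L \<le> L' \<and> agree L s s' \<and> (\<forall>i. L \<le> i \<and> i < L' \<and> r i < k \<longrightarrow> \<not> s' i)"

lemma r_enc: "r (prod_encode (k, M)) = k" by (simp add: r_def)

lemma ext_trans: "ext k L s L1 s1 \<Longrightarrow> ext k L1 s1 L2 s2 \<Longrightarrow> ext k L s L2 s2"
  unfolding ext_def agree_def
  by (smt (verit) le_trans not_le order.strict_trans2)

lemma adm_mono: "ext k L s L' s' \<Longrightarrow> adm k L' s' b \<Longrightarrow> adm k L s b"
  unfolding ext_def adm_def agree_def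
  by (smt (verit) le_trans not_le order.strict_trans2)

lemma agree_mono: "agree L a b \<Longrightarrow> L' \<le> L \<Longrightarrow> agree L' a b"
  by (auto simp: agree_def)

lemma agree_trans: "agree L a b \<Longrightarrow> agree L b c \<Longrightarrow> agree L a c"
  by (auto simp: agree_def)

lemma limit_seq:
  fixes Ls :: "nat \<Rightarrow> nat" and ss :: "nat \<Rightarrow> nat \<Rightarrow> bool"
  assumes inc: "\<And>j. Ls j < Ls (Suc j)" and ag: "\<And>j. agree (Ls j) (ss j) (ss (Suc j))"
  shows "agree (Ls j) (ss j) (\<lambda>i. ss (Suc i) i)" "j \<le> Ls j"
proof -
  have mono: "Ls j \<le> Ls (j + d)" for j d
  proof (induction d)
    case (Suc d) then show ?case using inc[of "j+d"] by simp
  qed simp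
  have ch: "agree (Ls j) (ss j) (ss (j + d))" for j d
  proof (induction d)
    case 0 then show ?case by (simp add: agree_def)
  next
    case (Suc d)
    have "agree (Ls j) (ss (j+d)) (ss (Suc (j+d)))"
      using agree_mono[OF ag[of "j+d"] mono[of j d]] .
    then show ?case using Suc agree_trans by fastforce
  qed
  show ge: "j \<le> Ls j" for j
  proof (induction j)
    case (Suc j) then show ?case using inc[of j] by simp
  qed simp
  show "agree (Ls j) (ss j) (\<lambda>i. ss (Suc i) i)"
    unfolding agree_def
  proof (intro allI impI)
    fix i assume i: "i < Ls j"
    show "ss j i = ss (Suc i) i"
    proof (cases "j \<le> Suc i")
      case True
      then obtain d where "Suc i = j + d" using le_Suc_ex by blast
      then show ?thesis using ch[of j d] i by (simp add: agree_def)
    next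
      case False
      then obtain d where d: "j = Suc i + d" by (metis le_Suc_ex nat_le_linear)
      have "i < Ls (Suc i)" using ge[of "Suc i"] by simp
      then show ?thesis using ch[of "Suc i" d] d by (simp add: agree_def)
    qed
  qed
qed

lemma inner:
  fixes W :: "nat \<Rightarrow> real set"
  assumes W: "\<And>j. open (W j)"
    and H: "\<And>b. (\<forall>j. phi b \<in> W j) \<Longrightarrow> finite {p. r p = k \<and> b p}"
  shows "\<exists>L' s'. ext k L s L' s' \<and> (\<forall>b. adm k L' s' b \<longrightarrow> \<not>(\<forall>j. phi b \<in> W j))"
proof (rule ccontr)
  assume "\<not> ?thesis"
  then have N: "\<And>L' s'. ext k L s L' s' \<Longrightarrow> \<exists>b. adm k L' s' b \<and> (\<forall>j. phi b \<in> W j)" by blast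
  define Q :: "nat \<times> nat \<times> (nat\<Rightarrow>bool) \<Rightarrow> nat \<times> (nat \<Rightarrow> bool) \<times> (nat \<Rightarrow> bool) \<times> nat \<times> nat \<Rightarrow> bool"
    where "Q = (\<lambda>(j, L1, s1) (L2, s2, b, M, q).
     ext k L s L1 s1 \<longrightarrow>
     (ext k L1 s1 L2 s2 \<and> L1 < M \<and> M \<le> q \<and> q < L2 \<and> agree M b s2 \<and> s2 q \<and> r q = k \<and>
      (\<forall>y. \<bar>y - phi b\<bar> \<le> 1/3^M \<longrightarrow> y \<in> W j)))"
  have step: "\<forall>x. \<exists>y. Q x y"
  proof
    fix x :: "nat \<times> nat \<times> (nat \<Rightarrow> bool)"
    obtain j L1 s1 where x: "x = (j, L1, s1)" by (metis prod_cases3)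
    show "\<exists>y. Q x y"
    proof (cases "ext k L s L1 s1")
      case False then show ?thesis by (simp add: Q_def x)
    next
      case True
      then obtain b where b: "adm k L1 s1 b" "\<forall>j. phi b \<in> W j" using N by blast
      then obtain e where e: "e > 0" "ball (phi b) e \<subseteq> W j" using W open_contains_ball by blast
      obtain n where n: "(1/3::real)^n < e" using real_arch_pow_inv[of e "1/3::real"] e by auto
      define M where "M = max n (Suc L1)"
      have "(1::real)/3^M \<le> 1/3^n" by (simp add: M_def field_simps)
      moreover have "(1/3::real)^n = 1/3^n" by (simp add: power_divide)
      ultimately have Me: "1/3^M < e" using n by linarith
      define q where "q = prod_encode (k, M)"
      have qM: "M \<le> q" by (simp add: q_def le_prod_encode_2)
      have rq: "r q = k" by (simp add: q_def r_enc)
      define s2 where "s2 i = (if i < M then b i else i = q)" for i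
      have "ext k L1 s1 (Suc q) s2"
        unfolding ext_def
      proof (intro conjI allI impI)
        show "L1 \<le> Suc q" using qM by (simp add: M_def)
        show "agree L1 s1 s2" using b(1) by (auto simp: adm_def agree_def s2_def M_def)
        fix i assume "L1 \<le> i \<and> i < Suc q \<and> r i < k"
        then show "\<not> s2 i" using b(1) rq by (auto simp: adm_def s2_def)
      qed
      moreover have "\<forall>y. \<bar>y - phi b\<bar> \<le> 1/3^M \<longrightarrow> y \<in> W j"
        using e Me by (auto simp: dist_real_def subset_iff)
      moreover have "L1 < M" "agree M b s2" "s2 q" using qM by (auto simp: M_def agree_def s2_def)
      ultimately have "Q x (Suc q, s2, b, M, q)" using qM rq by (simp add: Q_def x)
      then show ?thesis by blast
    qed
  qed
  then obtain g where g: "\<And>x. Q x (g x)" by metis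
  define nL where "nL j L1 s1 = fst (g (j, L1, s1))" for j L1 s1
  define ns where "ns j L1 s1 = fst (snd (g (j, L1, s1)))" for j L1 s1
  define nb where "nb j L1 s1 = fst (snd (snd (g (j, L1, s1))))" for j L1 s1
  define nM where "nM j L1 s1 = fst (snd (snd (snd (g (j, L1, s1)))))" for j L1 s1
  define nq where "nq j L1 s1 = snd (snd (snd (snd (g (j, L1, s1)))))" for j L1 s1
  have nx: "ext k L1 s1 (nL j L1 s1) (ns j L1 s1) \<and> L1 < nM j L1 s1 \<and> nM j L1 s1 \<le> nq j L1 s1 \<and>
     nq j L1 s1 < nL j L1 s1 \<and> agree (nM j L1 s1) (nb j L1 s1) (ns j L1 s1) \<and>
     ns j L1 s1 (nq j L1 s1) \<and> r (nq j L1 s1) = k \<and>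
     (\<forall>y. \<bar>y - phi (nb j L1 s1)\<bar> \<le> 1/3^(nM j L1 s1) \<longrightarrow> y \<in> W j)"
    if "ext k L s L1 s1" for j L1 s1
  proof -
    obtain a1 a2 a3 a4 a5 where ga: "g (j, L1, s1) = (a1, a2, a3, a4, a5)" by (metis prod_cases5)
    show ?thesis using g[of "(j, L1, s1)"] that
      by (simp add: Q_def ga nL_def ns_def nb_def nM_def nq_def)
  qed
  define st where "st = rec_nat (L, s) (\<lambda>j p. (nL j (fst p) (snd p), ns j (fst p) (snd p)))"
  define Ls where "Ls j = fst (st j)" for j
  define ss where "ss j = snd (st j)" for j
  have st0: "Ls 0 = L" "ss 0 = s" by (simp_all add: Ls_def ss_def st_def)
  have stS: "Ls (Suc j) = nL j (Ls j) (ss j)" "ss (Suc j) = ns j (Ls j) (ss j)" for j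
    by (simp_all add: Ls_def ss_def st_def)
  have inv: "ext k L s (Ls j) (ss j)" for j
  proof (induction j)
    case 0 then show ?case by (auto simp: st0 ext_def agree_def)
  next
    case (Suc j)
    have "ext k (Ls j) (ss j) (Ls (Suc j)) (ss (Suc j))" using nx[OF Suc] by (simp add: stS)
    then show ?case using Suc ext_trans by blast
  qed
  define Mj where "Mj j = nM j (Ls j) (ss j)" for j
  define bj where "bj j = nb j (Ls j) (ss j)" for j
  define qj where "qj j = nq j (Ls j) (ss j)" for j
  have P: "ext k (Ls j) (ss j) (Ls (Suc j)) (ss (Suc j)) \<and> Ls j < Mj j \<and> Mj j \<le> qj j \<and>
     qj j < Ls (Suc j) \<and> agree (Mj j) (bj j) (ss (Suc j)) \<and> ss (Suc j) (qj j) \<and> r (qj j) = k \<and>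
     (\<forall>y. \<bar>y - phi (bj j)\<bar> \<le> 1/3^(Mj j) \<longrightarrow> y \<in> W j)" for j
    using nx[OF inv[of j], of j] by (simp add: stS Mj_def bj_def qj_def)
  have p_ext: "ext k (Ls j) (ss j) (Ls (Suc j)) (ss (Suc j))" for j using P[of j] by blast
  have p_LM: "Ls j < Mj j" for j using P[of j] by blast
  have p_Mq: "Mj j \<le> qj j" for j using P[of j] by blast
  have p_qL: "qj j < Ls (Suc j)" for j using P[of j] by blast
  have p_ag: "agree (Mj j) (bj j) (ss (Suc j))" for j using P[of j] by blast
  have p_sq: "ss (Suc j) (qj j)" for j using P[of j] by blast
  have p_rq: "r (qj j) = k" for j using P[of j] by blast
  have p_W: "\<And>y. \<bar>y - phi (bj j)\<bar> \<le> 1/3^(Mj j) \<Longrightarrow> y \<in> W j" for j using P[of j] by blast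
  have inc: "Ls j < Ls (Suc j)" for j using p_LM[of j] p_Mq[of j] p_qL[of j] by linarith
  have ag: "agree (Ls j) (ss j) (ss (Suc j))" for j using p_ext[of j] by (simp add: ext_def)
  define bs where "bs = (\<lambda>i. ss (Suc i) i)"
  have agb: "agree (Ls j) (ss j) bs" for j
    using limit_seq(1)[of Ls ss, OF inc ag] by (simp add: bs_def)
  have geL: "j \<le> Ls j" for j using limit_seq(2)[of Ls ss, OF inc ag] .
  have inW: "phi bs \<in> W j" for j
  proof -
    have "Mj j < Ls (Suc j)" using p_Mq[of j] p_qL[of j] by linarith
    then have "agree (Mj j) (ss (Suc j)) bs" using agree_mono[OF agb] less_imp_le by blast
    then have "agree (Mj j) (bj j) bs" using p_ag[of j] agree_trans by blast
    then have "\<bar>phi (bj j) - phi bs\<bar> \<le> 1/3^(Mj j)" by (rule phi_agree)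
    then show ?thesis using p_W[of "phi bs" j] by (simp add: abs_minus_commute)
  qed
  have "\<exists>p\<ge>j. r p = k \<and> bs p" for j
  proof -
    have "Ls (Suc j) < qj (Suc j)" using p_LM[of "Suc j"] p_Mq[of "Suc j"] by linarith
    moreover have "bs (qj (Suc j))" using agb[of "Suc (Suc j)"] p_qL[of "Suc j"] p_sq[of "Suc j"]
      by (simp add: agree_def)
    ultimately show ?thesis using geL[of "Suc j"] p_rq[of "Suc j"]
      by (intro exI[of _ "qj (Suc j)"]) auto
  qed
  then have "infinite {p. r p = k \<and> bs p}" by (simp add: infinite_nat_iff_unbounded_le)
  then show False using H inW by blast
qed

lemma skolem3: "(\<forall>a b c. \<exists>d e. P a b c d e) \<Longrightarrow> \<exists>f g. \<forall>a b c. P a b c (f a b c) (g a b c)"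
  by metis

lemma core:
  fixes W :: "nat \<Rightarrow> nat \<Rightarrow> real set"
  assumes W: "\<And>k j. open (W k j)"
    and A: "\<And>b. P3 b \<Longrightarrow> \<exists>k. \<forall>j. phi b \<in> W k j"
  shows "\<exists>b. \<not> P3 b \<and> (\<exists>k. \<forall>j. phi b \<in> W k j)"
proof (rule ccontr)
  assume "\<not> ?thesis"
  then have H: "\<And>b k. (\<forall>j. phi b \<in> W k j) \<Longrightarrow> P3 b" by blast
  have step: "\<forall>k L s. \<exists>L' s'. ext k L s L' s' \<and> L < L' \<and> (\<forall>b. adm k L' s' b \<longrightarrow> \<not>(\<forall>j. phi b \<in> W k j))"
  proof (intro allI)
    fix k L s
    have "\<And>b. (\<forall>j. phi b \<in> W k j) \<Longrightarrow> finite {p. r p = k \<and> b p}" using H by (simp add: P3_def)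
    then obtain L1 s1 where 1: "ext k L s L1 s1" "\<forall>b. adm k L1 s1 b \<longrightarrow> \<not>(\<forall>j. phi b \<in> W k j)"
      using inner[of "W k" k L s] W by blast
    define s2 where "s2 = s1(L1 := False)"
    have e2: "ext k L1 s1 (Suc L1) s2" by (auto simp: ext_def agree_def s2_def)
    have "ext k L s (Suc L1) s2" using ext_trans[OF 1(1) e2] .
    moreover have "L < Suc L1" using 1(1) by (simp add: ext_def)
    moreover have "\<forall>b. adm k (Suc L1) s2 b \<longrightarrow> \<not>(\<forall>j. phi b \<in> W k j)"
      using adm_mono[OF e2] 1(2) by blast
    ultimately show "\<exists>L' s'. ext k L s L' s' \<and> L < L' \<and> (\<forall>b. adm k L' s' b \<longrightarrow> \<not>(\<forall>j. phi b \<in> W k j))"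
      by blast
  qed
  then obtain nL ns where nx: "\<And>k L s. ext k L s (nL k L s) (ns k L s) \<and> L < nL k L s \<and>
     (\<forall>b. adm k (nL k L s) (ns k L s) b \<longrightarrow> \<not>(\<forall>j. phi b \<in> W k j))"
    using skolem3[OF step] by blast
  define st where "st = rec_nat (0::nat, \<lambda>_::nat. False) (\<lambda>j p. (nL j (fst p) (snd p), ns j (fst p) (snd p)))"
  define Ls where "Ls j = fst (st j)" for j
  define ss where "ss j = snd (st j)" for j
  have stS: "Ls (Suc j) = nL j (Ls j) (ss j)" "ss (Suc j) = ns j (Ls j) (ss j)" for j
    by (simp_all add: Ls_def ss_def st_def)
  have p_ext: "ext j (Ls j) (ss j) (Ls (Suc j)) (ss (Suc j))" for j using nx[of j "Ls j" "ss j"] by (simp add: stS)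
  have inc: "Ls j < Ls (Suc j)" for j using nx[of j "Ls j" "ss j"] by (simp add: stS)
  have p_av: "\<And>b. adm j (Ls (Suc j)) (ss (Suc j)) b \<Longrightarrow> \<not>(\<forall>i. phi b \<in> W j i)" for j
    using nx[of j "Ls j" "ss j"] by (simp add: stS)
  have ag: "agree (Ls j) (ss j) (ss (Suc j))" for j using p_ext[of j] by (simp add: ext_def)
  define bs where "bs = (\<lambda>i. ss (Suc i) i)"
  have agb: "agree (Ls j) (ss j) bs" for j
    using limit_seq(1)[of Ls ss, OF inc ag] by (simp add: bs_def)
  have geL: "j \<le> Ls j" for j using limit_seq(2)[of Ls ss, OF inc ag] .
  have Zs: "\<not> ss (Suc k + d) i" if "Ls (Suc k) \<le> i" "i < Ls (Suc k + d)" "r i < k" for k d i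
    using that(2)
  proof (induction d)
    case 0 then show ?case using that(1) by simp
  next
    case (Suc d)
    show ?case
    proof (cases "i < Ls (Suc k + d)")
      case True
      then have "ss (Suc k + Suc d) i = ss (Suc k + d) i" using ag[of "Suc k + d"] by (simp add: agree_def)
      then show ?thesis using Suc.IH True by simp
    next
      case False
      have "Suc k + d \<ge> k" by simp
      then have "r i < Suc k + d" using that(3) by linarith
      moreover have "Ls (Suc k + d) \<le> i" using False by simp
      moreover have "i < Ls (Suc (Suc k + d))" using Suc.prems by simp
      ultimately show ?thesis using p_ext[of "Suc k + d"] unfolding ext_def by simp
    qed
  qed
  have Z: "\<not> bs i" if "Ls (Suc k) \<le> i" "r i < k" for k i
  proof -
    have "Suc k \<le> Ls (Suc k)" by (rule geL)
    then have ki: "Suc i = Suc k + (i - k)" using that(1) by linarith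
    have "i < Ls (Suc i)" using geL[of "Suc i"] by simp
    then have "i < Ls (Suc k + (i - k))" using ki by metis
    then have "\<not> ss (Suc k + (i - k)) i" using Zs[OF that(1) _ that(2)] by blast
    then have "\<not> ss (Suc i) i" using ki by metis
    then show ?thesis by (simp add: bs_def)
  qed
  have "adm k (Ls (Suc k)) (ss (Suc k)) bs" for k
    unfolding adm_def
  proof (intro conjI allI impI)
    show "agree (Ls (Suc k)) (ss (Suc k)) bs" by (rule agb)
    fix i assume "Ls (Suc k) \<le> i" "r i < k"
    then show "\<not> bs i" by (rule Z)
  qed
  then have notW: "\<not>(\<forall>i. phi bs \<in> W k i)" for k using p_av[of k bs] by simp
  have "P3 bs"
    unfolding P3_def
  proof
    fix m
    have "{p. r p = m \<and> bs p} \<subseteq> {..< Ls (Suc (Suc m))}"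
    proof
      fix p assume "p \<in> {p. r p = m \<and> bs p}"
      then have "r p < Suc m" "bs p" by auto
      then have "\<not> Ls (Suc (Suc m)) \<le> p" using Z[of "Suc m" p] by blast
      then show "p \<in> {..< Ls (Suc (Suc m))}" by simp
    qed
    then show "finite {p. r p = m \<and> bs p}" using finite_subset by blast
  qed
  then obtain k where "\<forall>j. phi bs \<in> W k j" using A by blast
  then show False using notW[of k] by simp
qed

definition gd :: "'a::metric_space set \<Rightarrow> bool" where
  "gd A \<longleftrightarrow> (\<exists>Q. (\<forall>j::nat. open (Q j)) \<and> A = (\<Inter>j. Q j))"

lemma gd_open: "open A \<Longrightarrow> gd A"
  unfolding gd_def by (rule exI[of _ "\<lambda>_. A"]) auto

lemma gd_closed: assumes "closed A" shows "gd A"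
  unfolding gd_def
proof (intro exI conjI allI)
  let ?O = "\<lambda>j::nat. \<Union>a\<in>A. ball a (1 / real (Suc j))"
  show "open (?O j)" for j by blast
  show "A = (\<Inter>j. ?O j)"
  proof
    show "A \<subseteq> (\<Inter>j. ?O j)" by force
    show "(\<Inter>j. ?O j) \<subseteq> A"
    proof
      fix x assume x: "x \<in> (\<Inter>j. ?O j)"
      have "x \<in> closure A" unfolding closure_approachable
      proof (intro allI impI)
        fix e :: real assume "e > 0"
        then obtain j where j: "inverse (real (Suc j)) < e" using reals_Archimedean by blast
        from x have "x \<in> ?O j" by blast
        then obtain a where "a \<in> A" "dist a x < 1 / real (Suc j)" by auto
        moreover have "1 / real (Suc j) < e" using j by (simp add: inverse_eq_divide)
        ultimately show "\<exists>y\<in>A. dist y x < e" by (meson less_trans)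
      qed
      then show "x \<in> A" using assms closure_closed by blast
    qed
  qed
qed

lemma gd_Int: assumes "gd A" "gd B" shows "gd (A \<inter> B)"
proof -
  obtain OA OB where "\<forall>j::nat. open (OA j)" "A = (\<Inter>j. OA j)" "\<forall>j::nat. open (OB j)" "B = (\<Inter>j. OB j)"
    using assms unfolding gd_def by metis
  then show ?thesis unfolding gd_def by (intro exI[of _ "\<lambda>j. OA j \<inter> OB j"]) auto
qed

lemma gd_Un: assumes "gd A" "gd B" shows "gd (A \<union> B)"
proof -
  obtain OA OB where o: "\<forall>j::nat. open (OA j)" "A = (\<Inter>j. OA j)" "\<forall>j::nat. open (OB j)" "B = (\<Inter>j. OB j)"
    using assms unfolding gd_def by metis
  let ?O = "\<lambda>n. OA (fst (prod_decode n)) \<union> OB (snd (prod_decode n))"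
  have "A \<union> B = (\<Inter>n. ?O n)"
  proof
    show "A \<union> B \<subseteq> (\<Inter>n. ?O n)" using o by auto
    show "(\<Inter>n. ?O n) \<subseteq> A \<union> B"
    proof
      fix x assume x: "x \<in> (\<Inter>n. ?O n)"
      show "x \<in> A \<union> B"
      proof (rule ccontr)
        assume "x \<notin> A \<union> B"
        then obtain i j where "x \<notin> OA i" "x \<notin> OB j" using o by auto
        moreover have "x \<in> ?O (prod_encode (i, j))" using x by blast
        ultimately show False by simp
      qed
    qed
  qed
  then show ?thesis unfolding gd_def using o by (intro exI[of _ ?O]) auto
qed

lemma gd_INT: assumes "\<And>k::nat. gd (A k)" shows "gd (\<Inter>k. A k)"
proof -
  have "\<forall>k. \<exists>Q. (\<forall>j::nat. open (Q j)) \<and> A k = (\<Inter>j. Q j)" using assms unfolding gd_def by blast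
  then obtain Q where "\<forall>k. (\<forall>j::nat. open (Q k j)) \<and> A k = (\<Inter>j. Q k j)" using choice[OF \<open>\<forall>k. _\<close>] by blast
  then have o: "\<And>k j. open (Q k j)" "\<And>k. A k = (\<Inter>j. Q k j)" by auto
  let ?O = "\<lambda>n. Q (fst (prod_decode n)) (snd (prod_decode n))"
  have "(\<Inter>k. A k) = (\<Inter>n. ?O n)"
  proof
    show "(\<Inter>k. A k) \<subseteq> (\<Inter>n. ?O n)" using o by auto
    show "(\<Inter>n. ?O n) \<subseteq> (\<Inter>k. A k)"
    proof
      fix x assume x: "x \<in> (\<Inter>n. ?O n)"
      have "x \<in> Q k j" for k j
      proof -
        have "x \<in> ?O (prod_encode (k, j))" using x by blast
        then show ?thesis by simp
      qed
      then show "x \<in> (\<Inter>k. A k)" using o by auto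
    qed
  qed
  then show ?thesis unfolding gd_def using o by (intro exI[of _ ?O]) auto
qed

lemma gd_Inter_countable: assumes "countable I" "\<And>i. i \<in> I \<Longrightarrow> gd (A i)" shows "gd (\<Inter>i\<in>I. A i)"
proof (cases "I = {}")
  case True then show ?thesis by (simp add: gd_open)
next
  case False
  have "(\<Inter>i\<in>I. A i) = (\<Inter>n. A (from_nat_into I n))"
    using range_from_nat_into[OF False assms(1)] by (metis image_image)
  moreover have "gd (\<Inter>n. A (from_nat_into I n))"
    by (intro gd_INT assms(2) from_nat_into[OF False])
  ultimately show ?thesis by simp
qed

lemma borel2: "borel_levels 2 T = ({\<Union>\<U> | \<U>. countable \<U> \<and> \<U> \<subseteq> {topspace T - S | S. openin T S}},
   {topspace T - S | S. openin T S} \<union> {topspace T - S | S. S \<in> {\<Union>\<U> | \<U>. countable \<U> \<and> \<U> \<subseteq> {topspace T - S | S. openin T S}}})"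
  by (simp add: numeral_2_eq_2 Let_def)

lemma borel3: "fst (borel_levels 3 T) = {\<Union>\<U> | \<U>. countable \<U> \<and> \<U> \<subseteq> snd (borel_levels 2 T)}"
proof -
  have "(3::nat) = Suc (Suc (Suc 0))" by simp
  then show ?thesis by (simp only:) (simp add: Let_def numeral_2_eq_2)
qed

lemma gd_Pi0_2: assumes "gd G" shows "X \<inter> G \<in> Pi0 2 (top_of_set X)"
proof -
  obtain Q where o: "\<And>j::nat. open (Q j)" "G = (\<Inter>j. Q j)" using assms unfolding gd_def by metis
  let ?U = "range (\<lambda>j. X - Q j)"
  have "?U \<subseteq> {topspace (top_of_set X) - S | S. openin (top_of_set X) S}"
  proof
    fix V assume "V \<in> ?U"
    then obtain j where "V = X - Q j" by auto
    moreover have "openin (top_of_set X) (X \<inter> Q j)" using o(1) by (auto simp: openin_open)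
    moreover have "X - Q j = X - (X \<inter> Q j)" by auto
    ultimately show "V \<in> {topspace (top_of_set X) - S | S. openin (top_of_set X) S}" by auto
  qed
  then have "\<Union>?U \<in> {\<Union>\<U> | \<U>. countable \<U> \<and> \<U> \<subseteq> {topspace (top_of_set X) - S | S. openin (top_of_set X) S}}"
    by blast
  then have "\<Union>?U \<in> Sigma0 2 (top_of_set X)" unfolding Sigma0_def borel2 by (simp only: fst_conv)
  moreover have "X \<inter> G = X - \<Union>?U" using o by auto
  ultimately show ?thesis unfolding Pi0_def by auto
qed

lemma c1_lemma:
  fixes X :: "'a::metric_space set"
  assumes "V \<in> {topspace (top_of_set X) - S | S. openin (top_of_set X) S}"
  shows "\<exists>G. gd G \<and> V = X \<inter> G \<and> V \<subseteq> X"
proof -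
  from assms obtain Q where Q: "openin (top_of_set X) Q" "V = X - Q" by auto
  from openin_open[THEN iffD1, OF Q(1)] obtain Q' where Q': "open Q'" "Q = X \<inter> Q'" by (elim exE conjE)
  have e1: "V = X \<inter> (- Q')" using Q(2) Q'(2) by auto
  have e2: "gd (- Q')" using Q'(1) by (intro gd_closed) (simp add: closed_Compl)
  have e3: "V \<subseteq> X" using e1 by blast
  show ?thesis using e1 e2 e3 by blast
qed

lemma c2_lemma:
  fixes X :: "'a::metric_space set"
  assumes "U \<in> snd (borel_levels 2 (top_of_set X))"
  shows "\<exists>G. gd G \<and> U = X \<inter> G \<and> U \<subseteq> X"
proof -
  let ?T = "top_of_set X"
  let ?c1 = "{topspace ?T - S | S. openin ?T S}"
  have "U \<in> ?c1 \<union> {topspace ?T - S | S. S \<in> {\<Union>\<U> | \<U>. countable \<U> \<and> \<U> \<subseteq> ?c1}}"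
    using assms by (simp only: borel2 snd_conv)
  then consider "U \<in> ?c1" | "U \<in> {topspace ?T - S | S. S \<in> {\<Union>\<U> | \<U>. countable \<U> \<and> \<U> \<subseteq> ?c1}}"
    by (rule UnE)
  then show ?thesis
  proof cases
    case 1 then show ?thesis by (rule c1_lemma)
  next
    case 2
    then obtain S' where S': "U = X - S'" "S' \<in> {\<Union>\<U> | \<U>. countable \<U> \<and> \<U> \<subseteq> ?c1}" by auto
    then obtain \<V> where V0: "S' = \<Union>\<V>" "countable \<V>" "\<V> \<subseteq> ?c1" by auto
    have "\<forall>V\<in>\<V>. \<exists>Q. open Q \<and> V = X - Q"
    proof
      fix V assume "V \<in> \<V>"
      then have "V \<in> ?c1" using V0(3) by blast
      then obtain Q where Q: "openin ?T Q" "V = X - Q" by auto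
      from openin_open[THEN iffD1, OF Q(1)] obtain Q' where Q': "open Q'" "Q = X \<inter> Q'" by (elim exE conjE)
      have "open Q' \<and> V = X - Q'" using Q Q' by auto
      then show "\<exists>Q. open Q \<and> V = X - Q" by (rule exI)
    qed
    from bchoice[OF this] obtain Of where Of0: "\<forall>V\<in>\<V>. open (Of V) \<and> V = X - Of V"
      by (elim exE)
    have Of: "open (Of V) \<and> V = X - Of V" if "V \<in> \<V>" for V using Of0 that by (rule bspec)
    have g: "gd (\<Inter>V\<in>\<V>. Of V)" using Of V0(2) by (intro gd_Inter_countable gd_open) auto
    have "X - \<Union>\<V> = X \<inter> (\<Inter>V\<in>\<V>. Of V)"
    proof
      show "X - \<Union>\<V> \<subseteq> X \<inter> (\<Inter>V\<in>\<V>. Of V)"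
      proof
        fix x assume x: "x \<in> X - \<Union>\<V>"
        have "x \<in> Of V" if "V \<in> \<V>" for V
        proof -
          have "x \<notin> V" using x that by blast
          then show ?thesis using x Of[OF that] by blast
        qed
        then show "x \<in> X \<inter> (\<Inter>V\<in>\<V>. Of V)" using x by blast
      qed
      show "X \<inter> (\<Inter>V\<in>\<V>. Of V) \<subseteq> X - \<Union>\<V>"
      proof
        fix x assume x: "x \<in> X \<inter> (\<Inter>V\<in>\<V>. Of V)"
        have "x \<notin> V" if "V \<in> \<V>" for V
        proof -
          have "x \<in> Of V" using x that by blast
          then show ?thesis using Of[OF that] by blast
        qed
        then show "x \<in> X - \<Union>\<V>" using x by blast
      qed
    qed
    then have "U = X \<inter> (\<Inter>V\<in>\<V>. Of V)" using S'(1) V0(1) by simp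
    then show ?thesis using g by blast
  qed
qed

lemma Pi0_3_decomp:
  fixes X :: "'a::metric_space set"
  assumes "C \<in> Pi0 3 (top_of_set X)"
  shows "\<exists>G::nat \<Rightarrow> 'a set. (\<forall>k. gd (G k)) \<and> X - C = (\<Union>k. X \<inter> G k)"
proof -
  let ?T = "top_of_set X"
  let ?c1 = "{topspace ?T - S | S. openin ?T S}"
  have "C \<in> {topspace ?T - S | S. S \<in> Sigma0 3 ?T}" using assms unfolding Pi0_def .
  then obtain S where S: "C = X - S" "S \<in> Sigma0 3 ?T" by auto
  have "S \<in> {\<Union>\<U> | \<U>. countable \<U> \<and> \<U> \<subseteq> snd (borel_levels 2 ?T)}"
    using S(2) unfolding Sigma0_def borel3 .
  then obtain \<U> where U: "S = \<Union>\<U>" "countable \<U>" "\<U> \<subseteq> snd (borel_levels 2 ?T)"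
    by blast
  have c2: "\<exists>G. gd G \<and> U = X \<inter> G \<and> U \<subseteq> X" if "U \<in> \<U>" for U
    using U(3) that by (intro c2_lemma) blast
  have "\<forall>U\<in>\<U>. \<exists>G. gd G \<and> U = X \<inter> G \<and> U \<subseteq> X" using c2 by blast
  from bchoice[OF this] obtain GU where GU0: "\<forall>U\<in>\<U>. gd (GU U) \<and> U = X \<inter> GU U \<and> U \<subseteq> X"
    by (elim exE)
  have GU: "gd (GU U) \<and> U = X \<inter> GU U \<and> U \<subseteq> X" if "U \<in> \<U>" for U using GU0 that by blast
  have "S \<subseteq> X" using U(1) GU by blast
  then have XC: "X - C = \<Union>\<U>" using S(1) U(1) by blast
  show ?thesis
  proof (cases "\<U> = {}")
    case True
    then show ?thesis using XC by (intro exI[of _ "\<lambda>_. {}"]) (auto intro: gd_open)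
  next
    case False
    have UU: "\<Union>\<U> = (\<Union>k. X \<inter> GU (from_nat_into \<U> k))"
    proof
      show "\<Union>\<U> \<subseteq> (\<Union>k. X \<inter> GU (from_nat_into \<U> k))"
      proof
        fix x assume "x \<in> \<Union>\<U>"
        then obtain U where "U \<in> \<U>" "x \<in> U" by auto
        moreover obtain k where "U = from_nat_into \<U> k"
          using range_from_nat_into[OF False U(2)] \<open>U \<in> \<U>\<close> by (metis rangeE)
        ultimately show "x \<in> (\<Union>k. X \<inter> GU (from_nat_into \<U> k))" using GU by blast
      qed
      show "(\<Union>k. X \<inter> GU (from_nat_into \<U> k)) \<subseteq> \<Union>\<U>"
      proof
        fix x assume "x \<in> (\<Union>k. X \<inter> GU (from_nat_into \<U> k))"
        then obtain k where "x \<in> X \<inter> GU (from_nat_into \<U> k)" by blast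
        moreover have "from_nat_into \<U> k \<in> \<U>" by (rule from_nat_into[OF False])
        ultimately show "x \<in> \<Union>\<U>" using GU by blast
      qed
    qed
    have gdk: "\<forall>k. gd (GU (from_nat_into \<U> k))" using GU from_nat_into[OF False] by blast
    have eq: "X - C = (\<Union>k. X \<inter> GU (from_nat_into \<U> k))" using XC UU by (rule trans)
    show ?thesis
    proof (intro exI[of _ "\<lambda>k. GU (from_nat_into \<U> k)"] conjI)
      show "\<forall>k. gd (GU (from_nat_into \<U> k))" by (rule gdk)
      show "X - C = (\<Union>k. X \<inter> GU (from_nat_into \<U> k))" by (rule eq)
    qed
  qed
qed

definition v :: "nat \<Rightarrow> real" where "v p = real (r p) + 1 / (real p + 3)"
definition Vset :: "real \<Rightarrow> real set" where
  "Vset x = insert (-1) {v p | p. \<exists>b. x = phi b \<and> b p}"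
definition Fm :: "real \<Rightarrow> real set" where
  "Fm x = (if x \<in> range phi then closure (Vset x) else \<nat>)"

lemma Vset_phi: "Vset (phi b) = insert (-1) {v p | p. b p}"
  unfolding Vset_def using phi_inj by metis

lemma Fm_phi: "Fm (phi b) = closure (insert (-1) {v p | p. b p})"
  by (simp add: Fm_def Vset_phi)

lemma Fm_gap: "x \<notin> range phi \<Longrightarrow> Fm x = \<nat>"
  by (simp add: Fm_def)

lemma dist_v: "r p = m \<Longrightarrow> dist (v p) (real m) = 1 / (real p + 3)"
  by (simp add: v_def dist_real_def)

lemma big_p:
  assumes "infinite {p. r p = m \<and> b p}" "e > 0"
  shows "\<exists>p. r p = m \<and> b p \<and> 1 / (real p + 3) < e"
proof -
  obtain N where N: "inverse (real (Suc N)) < e" using reals_Archimedean assms(2) by blast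
  obtain p where p: "p \<ge> N" "r p = m" "b p"
    using assms(1) unfolding infinite_nat_iff_unbounded_le by blast
  have "1 / (real p + 3) \<le> 1 / real (Suc N)" using p(1) by (simp add: field_simps)
  then show ?thesis using p N by (intro exI[of _ p]) (simp add: inverse_eq_divide)
qed

lemma cont_notP3:
  assumes "\<not> P3 b"
  shows "mv_continuous_at Fm {0..1} (phi b)"
proof -
  obtain m where m: "infinite {p. r p = m \<and> b p}" using assms by (auto simp: P3_def)
  have "real m \<in> Fm (phi b)"
    unfolding Fm_phi closure_approachable
  proof (intro allI impI)
    fix e :: real assume "e > 0"
    then obtain p where "r p = m" "b p" "1 / (real p + 3) < e" using big_p[OF m] by blast
    then show "\<exists>y\<in>insert (-1) {v p | p. b p}. dist y (real m) < e"
      using dist_v by (intro bexI[of _ "v p"]) auto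
  qed
  moreover have "\<exists>\<delta>>0. \<forall>x'\<in>{0..1}. dist (phi b) x' < \<delta> \<longrightarrow> (\<exists>y'\<in>Fm x'. dist (real m) y' < e)"
    if "e > 0" for e
  proof -
    obtain p where p: "r p = m" "b p" "1 / (real p + 3) < e" using big_p[OF m \<open>e > 0\<close>] by blast
    show ?thesis
    proof (intro exI[of _ "1/3^(Suc p)"] conjI ballI impI)
      show "(0::real) < 1/3^(Suc p)" by simp
      fix x' assume "x' \<in> {0..1}" "dist (phi b) x' < 1/3^(Suc p)"
      show "\<exists>y'\<in>Fm x'. dist (real m) y' < e"
      proof (cases "x' \<in> range phi")
        case True
        then obtain b' where b': "x' = phi b'" by auto
        then have "agree (Suc p) b b'" using \<open>dist (phi b) x' < _\<close>
          by (intro phi_close_agree) (simp add: dist_real_def)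
        then have "b' p" using p(2) by (simp add: agree_def)
        then have "v p \<in> Fm x'" using b' Fm_phi closure_subset by fastforce
        moreover have "dist (real m) (v p) < e" using dist_v[OF p(1)] p(3) by (simp add: dist_commute)
        ultimately show ?thesis by blast
      next
        case False
        then show ?thesis using Fm_gap \<open>e > 0\<close> by (intro bexI[of _ "real m"]) auto
      qed
    qed
  qed
  ultimately show ?thesis unfolding mv_continuous_at_def by blast
qed

lemma Fm_no_nat:
  assumes "P3 b"
  shows "Fm (phi b) \<inter> \<nat> = {}"
proof -
  have "real m \<notin> Fm (phi b)" for m
  proof
    assume mF: "real m \<in> Fm (phi b)"
    have "finite {p. r p = m \<and> b p}" using assms by (simp add: P3_def)
    then obtain B where B: "\<And>p. p \<in> {p. r p = m \<and> b p} \<Longrightarrow> p < B"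
      using finite_nat_bounded by blast
    define e where "e = 1 / (real B + 3)"
    have e: "e > 0" "e \<le> 1/3" by (auto simp: e_def field_simps)
    have far: "dist z (real m) \<ge> e" if zin: "z \<in> insert (-1) {v p | p. b p}" for z
    proof -
      consider "z = -1" | p where "z = v p" "b p" using zin by blast
      then show ?thesis
      proof cases
        case 1 then show ?thesis using e by (simp add: dist_real_def)
      next
        case 2
        have vp: "v p = real (r p) + 1 / (real p + 3)" by (simp add: v_def)
        have pos: "0 < 1 / (real p + 3)" "1 / (real p + 3) \<le> 1/3" by (auto simp: field_simps)
        consider "r p = m" | "r p > m" | "r p < m" by linarith
        then show ?thesis
        proof cases
          case 1
          then have "p < B" using B 2 by blast
          then have "e \<le> 1 / (real p + 3)" by (simp add: e_def field_simps)
          then show ?thesis using dist_v[OF 1] 2 by simp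
        next
          case 3
          then have "real (r p) + 1 \<le> real m" by linarith
          moreover have "real m - z \<le> dist z (real m)" unfolding dist_real_def by linarith
          ultimately show ?thesis using 2(1) vp pos e by linarith
        next
          case gt: 2
          then have "real (r p) \<ge> real m + 1" by linarith
          moreover have "z - real m \<le> dist z (real m)" unfolding dist_real_def by linarith
          ultimately show ?thesis using 2(1) vp pos e by linarith
        qed
      qed
    qed
    from mF have "\<exists>z\<in>insert (-1) {v p | p. b p}. dist z (real m) < e"
      unfolding Fm_phi closure_approachable using e by blast
    then obtain z where "z \<in> insert (-1) {v p | p. b p}" "dist z (real m) < e" by blast
    then show False using far[of z] by linarith
  qed
  then show ?thesis by (auto elim!: Nats_cases)
qed

lemma not_cont_P3:
  assumes "P3 b"
  shows "\<not> mv_continuous_at Fm {0..1} (phi b)"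
proof
  assume "mv_continuous_at Fm {0..1} (phi b)"
  then obtain y where y: "y \<in> Fm (phi b)"
    and c: "\<forall>\<epsilon>>0. \<exists>\<delta>>0. \<forall>x'\<in>{0..1}. dist (phi b) x' < \<delta> \<longrightarrow> (\<exists>y'\<in>Fm x'. dist y y' < \<epsilon>)"
    unfolding mv_continuous_at_def by blast
  have "y \<in> - \<nat>" using y Fm_no_nat[OF assms] by blast
  moreover have "open (- (\<nat>::real set))" by (simp add: open_Compl)
  ultimately obtain e where e: "e > 0" "ball y e \<subseteq> - \<nat>" using open_contains_ball by blast
  then obtain \<delta> where d: "\<delta> > 0" "\<forall>x'\<in>{0..1}. dist (phi b) x' < \<delta> \<longrightarrow> (\<exists>y'\<in>Fm x'. dist y y' < e)"
    using c by blast
  obtain L where L: "(1/3::real)^L < \<delta>/2" using real_arch_pow_inv[of "\<delta>/2" "1/3::real"] d(1) by auto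
  obtain x' where x': "x' \<in> {0..1}" "x' \<notin> range phi" "\<bar>x' - phi b\<bar> < 2/3^L" using gap_point by blast
  have "2/3^L = 2 * (1/3::real)^L" by (simp add: power_divide)
  then have "dist (phi b) x' < \<delta>" using x'(3) L by (simp add: dist_real_def abs_minus_commute)
  then obtain y' where "y' \<in> Fm x'" "dist y y' < e" using d(2) x'(1) by blast
  then show False using e(2) Fm_gap[OF x'(2)] by (auto simp: subset_iff)
qed

definition ee :: "nat \<Rightarrow> real" where "ee j = 1 / real (Suc j)"
definition Opp :: "nat \<Rightarrow> real set" where
  "Opp p = (\<Union>b\<in>{b. b p}. ball (phi b) (1/3^(Suc p)))"
definition Oj :: "nat \<Rightarrow> (real \<times> real) set" where
  "Oj j = (UNIV \<times> ball (-1) (ee j)) \<union> (\<Union>p. Opp p \<times> ball (v p) (ee j))"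

lemma open_Oj: "open (Oj j)"
  unfolding Oj_def Opp_def by (intro open_Un open_Times open_UN open_ball open_UNIV ballI)

lemma Oj_iff: "(phi b0, y) \<in> Oj j \<longleftrightarrow> (\<exists>z\<in>Vset (phi b0). dist z y < ee j)"
proof
  assume a: "(phi b0, y) \<in> Oj j"
  have "(phi b0, y) \<in> UNIV \<times> ball (-1) (ee j) \<or> (\<exists>p. (phi b0, y) \<in> Opp p \<times> ball (v p) (ee j))"
    using a unfolding Oj_def by blast
  then consider "dist (-1) y < ee j" | p where "phi b0 \<in> Opp p" "dist (v p) y < ee j"
    unfolding mem_Times_iff mem_ball fst_conv snd_conv by blast
  then show "\<exists>z\<in>Vset (phi b0). dist z y < ee j"
  proof cases
    case 1
    have "-1 \<in> Vset (phi b0)" unfolding Vset_phi by simp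
    then show ?thesis using 1 by blast
  next
    case 2
    then obtain b where b: "b p" "phi b0 \<in> ball (phi b) (1/3^(Suc p))" unfolding Opp_def by blast
    then have "agree (Suc p) b b0" by (intro phi_close_agree) (simp add: dist_real_def)
    then have "b0 p" using b(1) by (simp add: agree_def)
    then have "v p \<in> Vset (phi b0)" unfolding Vset_phi by blast
    then show ?thesis using 2(2) by blast
  qed
next
  assume "\<exists>z\<in>Vset (phi b0). dist z y < ee j"
  then obtain z where z: "z \<in> insert (-1) {v p | p. b0 p}" "dist z y < ee j" unfolding Vset_phi by blast
  then consider "z = -1" | p where "z = v p" "b0 p" by blast
  then show "(phi b0, y) \<in> Oj j"
  proof cases
    case 1
    then have "(phi b0, y) \<in> UNIV \<times> ball (-1) (ee j)" using z(2) by simp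
    then show ?thesis unfolding Oj_def by blast
  next
    case 2
    have "phi b0 \<in> ball (phi b0) (1/3^(Suc p))" by simp
    then have "phi b0 \<in> Opp p" unfolding Opp_def using 2(2) by blast
    moreover have "y \<in> ball (v p) (ee j)" using z(2) 2(1) by simp
    ultimately have "(phi b0, y) \<in> Opp p \<times> ball (v p) (ee j)" by simp
    then show ?thesis unfolding Oj_def by blast
  qed
qed

lemma closure_ee: "y \<in> closure S \<longleftrightarrow> (\<forall>j. \<exists>z\<in>S. dist z y < ee j)"
proof
  assume "y \<in> closure S"
  then show "\<forall>j. \<exists>z\<in>S. dist z y < ee j" unfolding closure_approachable by (simp add: ee_def)
next
  assume a: "\<forall>j. \<exists>z\<in>S. dist z y < ee j"
  show "y \<in> closure S" unfolding closure_approachable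
  proof (intro allI impI)
    fix e :: real assume "e > 0"
    then obtain j where j: "inverse (real (Suc j)) < e" using reals_Archimedean by blast
    obtain z where "z \<in> S" "dist z y < ee j" using a by blast
    then show "\<exists>z\<in>S. dist z y < e" using j by (intro bexI[of _ z]) (auto simp: ee_def inverse_eq_divide)
  qed
qed

definition GG :: "(real \<times> real) set" where
  "GG = ((range phi \<times> UNIV) \<inter> (\<Inter>j. Oj j)) \<union> ((- (range phi \<times> UNIV)) \<inter> (UNIV \<times> \<nat>))"

lemma gd_GG: "gd GG"
  unfolding GG_def
proof (intro gd_Un gd_Int)
  show "gd (range phi \<times> (UNIV::real set))" by (intro gd_closed closed_Times closed_range_phi closed_UNIV)
  show "gd (\<Inter>j. Oj j)" by (intro gd_INT gd_open open_Oj)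
  show "gd (- (range phi \<times> (UNIV::real set)))"
    by (intro gd_open open_Compl closed_Times closed_range_phi closed_UNIV)
  show "gd ((UNIV::real set) \<times> (\<nat>::real set))" by (intro gd_closed closed_Times closed_UNIV closed_Nats)
qed

lemma GG_iff: "(x, y) \<in> GG \<longleftrightarrow> (if x \<in> range phi then y \<in> closure (Vset x) else y \<in> \<nat>)"
proof (cases "x \<in> range phi")
  case True
  then obtain b0 where x: "x = phi b0" by auto
  have "(x, y) \<in> GG \<longleftrightarrow> (\<forall>j. (x, y) \<in> Oj j)" using True by (auto simp: GG_def)
  also have "\<dots> \<longleftrightarrow> y \<in> closure (Vset x)" unfolding closure_ee x Oj_iff ..
  finally show ?thesis using True by simp
next
  case False
  then show ?thesis by (auto simp: GG_def)
qed

lemma graph_eq: "{(x, y). x \<in> {0..1} \<and> y \<in> Fm x} = ({0..1} \<times> UNIV) \<inter> GG"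
proof (rule set_eqI)
  fix z :: "real \<times> real"
  obtain x y where z: "z = (x, y)" by (cases z)
  show "z \<in> {(x, y). x \<in> {0..1} \<and> y \<in> Fm x} \<longleftrightarrow> z \<in> ({0..1} \<times> UNIV) \<inter> GG"
    unfolding z using GG_iff[of x y] by (simp add: Fm_def)
qed

theorem theorem2p6:
  shows "\<exists>F :: real \<Rightarrow> real set.
     (\<forall>x\<in>{0..1}. F x \<noteq> {} \<and> closed (F x)) \<and>
     {(x, y). x \<in> {0..1} \<and> y \<in> F x} \<in> Pi0 2 (top_of_set ({0..1} \<times> (UNIV :: real set))) \<and>
     {x \<in> {0..1}. mv_continuous_at F {0..1} x} \<notin> Pi0 3 (top_of_set {0..1::real})"
proof (intro exI[of _ Fm] conjI)
  show "\<forall>x\<in>{0..1}. Fm x \<noteq> {} \<and> closed (Fm x)"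
  proof
    fix x :: real
    have "-1 \<in> Vset x" by (simp add: Vset_def)
    then have "closure (Vset x) \<noteq> {}" using closure_subset by blast
    moreover have "(\<nat>::real set) \<noteq> {}" using Nats_0 by blast
    ultimately show "Fm x \<noteq> {} \<and> closed (Fm x)" by (simp add: Fm_def)
  qed
  show "{(x, y). x \<in> {0..1} \<and> y \<in> Fm x} \<in> Pi0 2 (top_of_set ({0..1} \<times> (UNIV :: real set)))"
    unfolding graph_eq by (rule gd_Pi0_2[OF gd_GG])
  show "{x \<in> {0..1}. mv_continuous_at Fm {0..1} x} \<notin> Pi0 3 (top_of_set {0..1::real})"
  proof
    define C where "C = {x \<in> {0..1}. mv_continuous_at Fm {0..1} x}"
    assume "{x \<in> {0..1}. mv_continuous_at Fm {0..1} x} \<in> Pi0 3 (top_of_set {0..1::real})"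
    then have "C \<in> Pi0 3 (top_of_set {0..1::real})" by (simp add: C_def)
    then obtain G :: "nat \<Rightarrow> real set" where G: "\<forall>k. gd (G k)" "{0..1} - C = (\<Union>k. {0..1} \<inter> G k)"
      using Pi0_3_decomp by blast
    have "\<forall>k. \<exists>Q. (\<forall>j::nat. open (Q j)) \<and> G k = (\<Inter>j. Q j)" using G(1) unfolding gd_def by blast
    from choice[OF this] obtain W where W0: "\<forall>k. (\<forall>j::nat. open (W k j)) \<and> G k = (\<Inter>j. W k j)"
      by (elim exE)
    have Wo: "open (W k j)" for k j using W0 by blast
    have WG: "x \<in> G k \<longleftrightarrow> (\<forall>j. x \<in> W k j)" for x k using W0 by blast
    have "\<exists>b. \<not> P3 b \<and> (\<exists>k. \<forall>j. phi b \<in> W k j)"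
    proof (rule core[OF Wo])
      fix b assume "P3 b"
      then have "phi b \<notin> C" using not_cont_P3 by (simp add: C_def)
      moreover have "phi b \<in> {0..1}" using phi_bounds[of b] by simp
      ultimately have "phi b \<in> (\<Union>k. {0..1} \<inter> G k)" using G(2) by blast
      then show "\<exists>k. \<forall>j. phi b \<in> W k j" using WG by blast
    qed
    then obtain b k where b: "\<not> P3 b" "\<forall>j. phi b \<in> W k j" by blast
    have "phi b \<in> {0..1}" using phi_bounds[of b] by simp
    then have "phi b \<in> {0..1} - C" using G(2) b(2) WG by blast
    moreover have "phi b \<in> C" using cont_notP3[OF b(1)] \<open>phi b \<in> {0..1}\<close> by (simp add: C_def)
    ultimately show False by blast
  qed
qed

end
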